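(* For all integers $n \geq k \geq 1$, under the natural bi-partition of inputs (Alice holds $x \in \{0,1\}^n$, Bob holds $y \in \{0,1\}^k$), $R(\operatorname{SSD}_{n,k}) = \Omega(\log k)$.
   Context: $\operatorname{SSD}_{n,k} : \{0,1\}^n \times \{0,1\}^k \to \{0,1\}$ is $1$ iff $y$ is a subsequence of $x$ (there exist indices $i_1 < \dots < i_k$ with $x_{i_j} = y_j$). $R(f)$ is the minimum worst-case number of bits exchanged by a randomized two-party protocol computing $f$ with error probability at most $1/3$ on every input. *)

theory Defs
  imports Complex_Main "HOL-Library.Sublist"
begin

text \<open>Deterministic two-party protocol trees: Alice sees the first argument, Bob the second.
  Each internal node is one bit sent by its owner, computed from that player's view.\<close>
datatype ('a, 'b) ptree =
    Out bool
  | ANode "'a \<Rightarrow> bool" "('a, 'b) ptree" "('a, 'b) ptree"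
  | BNode "'b \<Rightarrow> bool" "('a, 'b) ptree" "('a, 'b) ptree"

fun peval :: "('a, 'b) ptree \<Rightarrow> 'a \<Rightarrow> 'b \<Rightarrow> bool" where
  "peval (Out v) x y = v"
| "peval (ANode g l r) x y = (if g x then peval r x y else peval l x y)"
| "peval (BNode g l r) x y = (if g y then peval r x y else peval l x y)"

text \<open>Communication cost = depth of the tree (worst-case number of bits exchanged).\<close>
fun pdepth :: "('a, 'b) ptree \<Rightarrow> nat" where
  "pdepth (Out v) = 0"
| "pdepth (ANode g l r) = Suc (max (pdepth l) (pdepth r))"
| "pdepth (BNode g l r) = Suc (max (pdepth l) (pdepth r))"

text \<open>Private-coin randomized protocol: a deterministic tree where Alice additionally sees her
  private random string ra, drawn uniformly from a finite nonempty set RA, and Bob sees rb drawn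
  uniformly and independently from RB.\<close>
definition computes_rand ::
  "('a \<Rightarrow> 'b \<Rightarrow> bool) \<Rightarrow> 'a set \<Rightarrow> 'b set \<Rightarrow> ('a \<times> nat, 'b \<times> nat) ptree \<Rightarrow> nat set \<Rightarrow> nat set \<Rightarrow> bool"
where
  "computes_rand f A B P RA RB \<longleftrightarrow>
     finite RA \<and> RA \<noteq> {} \<and> finite RB \<and> RB \<noteq> {} \<and>
     (\<forall>x\<in>A. \<forall>y\<in>B.
        3 * card {(ra, rb) \<in> RA \<times> RB. peval P (x, ra) (y, rb) \<noteq> f x y} \<le> card RA * card RB)"

definition Rcc :: "('a \<Rightarrow> 'b \<Rightarrow> bool) \<Rightarrow> 'a set \<Rightarrow> 'b set \<Rightarrow> nat" where
  "Rcc f A B = (LEAST c. \<exists>P RA RB. computes_rand f A B P RA RB \<and> pdepth P \<le> c)"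

definition SSD :: "bool list \<Rightarrow> bool list \<Rightarrow> bool" where
  "SSD x y \<longleftrightarrow> subseq y x"

definition bitstrings :: "nat \<Rightarrow> bool list set" where
  "bitstrings n = {xs. length xs = n}"

end

theory Submission
  imports Defs "HOL-Library.FuncSet"
begin

fun path :: "('a, 'b) ptree \<Rightarrow> 'a \<Rightarrow> 'b \<Rightarrow> bool list" where
  "path (Out v) a b = []"
| "path (ANode g l r) a b = g a # (if g a then path r a b else path l a b)"
| "path (BNode g l r) a b = g b # (if g b then path r a b else path l a b)"

fun aw :: "('a, 'b) ptree \<Rightarrow> 'a \<Rightarrow> bool list \<Rightarrow> bool" where
  "aw (Out v) a p = (p = [])"
| "aw (ANode g l r) a [] = False"
| "aw (ANode g l r) a (c#p) = (g a = c \<and> aw (if c then r else l) a p)"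
| "aw (BNode g l r) a [] = False"
| "aw (BNode g l r) a (c#p) = aw (if c then r else l) a p"

fun bw :: "('a, 'b) ptree \<Rightarrow> 'b \<Rightarrow> bool list \<Rightarrow> bool" where
  "bw (Out v) b p = (p = [])"
| "bw (ANode g l r) b [] = False"
| "bw (ANode g l r) b (c#p) = bw (if c then r else l) b p"
| "bw (BNode g l r) b [] = False"
| "bw (BNode g l r) b (c#p) = (g b = c \<and> bw (if c then r else l) b p)"

fun lv :: "('a, 'b) ptree \<Rightarrow> bool list \<Rightarrow> bool" where
  "lv (Out v) p = v"
| "lv (ANode g l r) [] = False"
| "lv (ANode g l r) (c#p) = lv (if c then r else l) p"
| "lv (BNode g l r) [] = False"
| "lv (BNode g l r) (c#p) = lv (if c then r else l) p"

lemma aw_bw_path: "(aw T a p \<and> bw T b p) \<longleftrightarrow> p = path T a b"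
proof (induction T arbitrary: p)
  case (Out v) then show ?case by auto
next
  case (ANode g l r) then show ?case by (cases p) auto
next
  case (BNode g l r) then show ?case by (cases p) auto
qed

lemma peval_path: "peval T a b = lv T (path T a b)"
  by (induction T) auto

lemma path_len: "length (path T a b) \<le> pdepth T"
  by (induction T) auto

lemma count_acc:
  assumes "finite RA" "finite RB"
  shows "card {(ra,rb) \<in> RA \<times> RB. peval P (x,ra) (y,rb)} =
    (\<Sum>p\<in>{p. length p \<le> pdepth P}. if lv P p then card {ra\<in>RA. aw P (x,ra) p} * card {rb\<in>RB. bw P (y,rb) p} else 0)"
proof -
  let ?Ps = "{p::bool list. length p \<le> pdepth P}"
  have fin: "finite ?Ps" using finite_lists_length_le[of "UNIV::bool set" "pdepth P"] by simp
  have eq: "{(ra,rb) \<in> RA \<times> RB. peval P (x,ra) (y,rb)} =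
    (\<Union>p\<in>{p\<in>?Ps. lv P p}. {ra\<in>RA. aw P (x,ra) p} \<times> {rb\<in>RB. bw P (y,rb) p})"
  proof
    show "{(ra,rb) \<in> RA \<times> RB. peval P (x,ra) (y,rb)} \<subseteq> (\<Union>p\<in>{p\<in>?Ps. lv P p}. {ra\<in>RA. aw P (x,ra) p} \<times> {rb\<in>RB. bw P (y,rb) p})"
    proof
      fix z assume "z \<in> {(ra,rb) \<in> RA \<times> RB. peval P (x,ra) (y,rb)}"
      then obtain ra rb where z: "z = (ra,rb)" "ra \<in> RA" "rb \<in> RB" "peval P (x,ra) (y,rb)" by blast
      let ?p = "path P (x,ra) (y,rb)"
      have "lv P ?p" using z(4) peval_path by metis
      moreover have "length ?p \<le> pdepth P" by (rule path_len)
      moreover have "aw P (x,ra) ?p" "bw P (y,rb) ?p" using aw_bw_path by metis+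
      ultimately show "z \<in> (\<Union>p\<in>{p\<in>?Ps. lv P p}. {ra\<in>RA. aw P (x,ra) p} \<times> {rb\<in>RB. bw P (y,rb) p})"
        using z by blast
    qed
    show "(\<Union>p\<in>{p\<in>?Ps. lv P p}. {ra\<in>RA. aw P (x,ra) p} \<times> {rb\<in>RB. bw P (y,rb) p}) \<subseteq> {(ra,rb) \<in> RA \<times> RB. peval P (x,ra) (y,rb)}"
    proof
      fix z assume "z \<in> (\<Union>p\<in>{p\<in>?Ps. lv P p}. {ra\<in>RA. aw P (x,ra) p} \<times> {rb\<in>RB. bw P (y,rb) p})"
      then obtain p ra rb where z: "z = (ra,rb)" "ra \<in> RA" "rb \<in> RB" "lv P p" "aw P (x,ra) p" "bw P (y,rb) p" by blast
      then have "p = path P (x,ra) (y,rb)" using aw_bw_path by metis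
      then have "peval P (x,ra) (y,rb)" using z(4) peval_path by metis
      then show "z \<in> {(ra,rb) \<in> RA \<times> RB. peval P (x,ra) (y,rb)}" using z by blast
    qed
  qed
  have "card (\<Union>p\<in>{p\<in>?Ps. lv P p}. {ra\<in>RA. aw P (x,ra) p} \<times> {rb\<in>RB. bw P (y,rb) p})
     = (\<Sum>p\<in>{p\<in>?Ps. lv P p}. card ({ra\<in>RA. aw P (x,ra) p} \<times> {rb\<in>RB. bw P (y,rb) p}))"
    apply (rule card_UN_disjoint)
    using fin assms apply auto
    by (metis aw_bw_path)
  also have "\<dots> = (\<Sum>p\<in>{p\<in>?Ps. lv P p}. card {ra\<in>RA. aw P (x,ra) p} * card {rb\<in>RB. bw P (y,rb) p})"
    by (simp add: card_cartesian_product)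
  also have "\<dots> = (\<Sum>p\<in>?Ps. if lv P p then card {ra\<in>RA. aw P (x,ra) p} * card {rb\<in>RB. bw P (y,rb) p} else 0)"
    by (rule sum.inter_filter[OF fin])
  finally show ?thesis using eq by simp
qed

lemma witness:
  assumes "length y = k" "length y' = k" "k \<ge> 1" "y \<noteq> y'"
  shows "SSD (y @ replicate m (\<not> last y')) y \<and> \<not> SSD (y @ replicate m (\<not> last y')) y'"
proof
  show "SSD (y @ replicate m (\<not> last y')) y" unfolding SSD_def by (rule subseq_rev_drop_many) simp
  show "\<not> SSD (y @ replicate m (\<not> last y')) y'"
  proof
    assume "SSD (y @ replicate m (\<not> last y')) y'"
    then obtain xs1 xs2 where h: "y' = xs1 @ xs2" "subseq xs1 y" "subseq xs2 (replicate m (\<not> last y'))"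
      unfolding SSD_def by (auto elim: subseq_appendE)
    show False
    proof (cases "xs2 = []")
      case True
      then have "xs1 = y'" using h by simp
      then show False using h(2) subseq_same_length assms by metis
    next
      case False
      then have "last xs2 \<in> set xs2" by simp
      then obtain z where "z \<in> set (replicate m (\<not> last y'))" "last xs2 = z"
        using list_emb_set[OF h(3)] by metis
      then have "last xs2 = (\<not> last y')" by (auto split: if_splits)
      moreover have "last y' = last xs2" using h(1) False by simp
      ultimately show False by simp
    qed
  qed
qed

fun bsend :: "nat \<Rightarrow> bool list \<Rightarrow> (bool list \<times> nat, bool list \<times> nat) ptree" where
  "bsend 0 acc = ANode (\<lambda>(x,_). SSD x acc) (Out False) (Out True)"
| "bsend (Suc m) acc = BNode (\<lambda>(y,_). y ! length acc) (bsend m (acc @ [False])) (bsend m (acc @ [True]))"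

lemma bsend_correct:
  "length y = length acc + m \<Longrightarrow> take (length acc) y = acc \<Longrightarrow> peval (bsend m acc) (x,ra) (y,rb) = SSD x y"
proof (induction m arbitrary: acc)
  case 0 then show ?case by simp
next
  case (Suc m)
  have t: "take (length (acc @ [y ! length acc])) y = acc @ [y ! length acc]"
    using Suc.prems by (simp add: take_Suc_conv_app_nth)
  show ?case
  proof (cases "y ! length acc")
    case True
    then show ?thesis using Suc.IH[of "acc @ [True]"] Suc.prems t by simp
  next
    case False
    then show ?thesis using Suc.IH[of "acc @ [False]"] Suc.prems t by simp
  qed
qed

lemma exists_proto: "\<exists>P RA RB. computes_rand SSD (bitstrings n) (bitstrings k) P RA RB"
proof -
  have "computes_rand SSD (bitstrings n) (bitstrings k) (bsend k []) {0} {0}"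
  proof -
    have "\<And>x y. length y = k \<Longrightarrow> peval (bsend k []) (x,0) (y,0) = SSD x y"
      using bsend_correct[of _ "[]" k] by simp
    then show ?thesis unfolding computes_rand_def bitstrings_def by (simp cong: conj_cong)
  qed
  then show ?thesis by blast
qed


lemma card_bitstrings: "card (bitstrings k) = 2 ^ k"
  using card_lists_length_eq[of "UNIV::bool set" k] by (simp add: bitstrings_def)

lemma finite_bitstrings: "finite (bitstrings k)"
  using finite_lists_length_eq[of "UNIV::bool set" k] by (simp add: bitstrings_def)

lemma sum_pow2_le: "(\<Sum>i\<le>d. (2::nat) ^ i) \<le> 2 ^ (d + 1)"
  by (induction d) auto

lemma card_Ps: "card {p::bool list. length p \<le> d} \<le> 2 ^ (d + 1)"
  using card_lists_length_le[of "UNIV::bool set" d] sum_pow2_le[of d] by simp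

lemma finite_Ps: "finite {p::bool list. length p \<le> d}"
  using finite_lists_length_le[of "UNIV::bool set" d] by simp

lemma acc_bounds:
  assumes "computes_rand SSD (bitstrings n) (bitstrings k) P RA RB"
    and "x \<in> bitstrings n" "y \<in> bitstrings k"
  shows "SSD x y \<Longrightarrow> 3 * card {(ra,rb) \<in> RA \<times> RB. peval P (x,ra) (y,rb)} \<ge> 2 * (card RA * card RB)"
    and "\<not> SSD x y \<Longrightarrow> 3 * card {(ra,rb) \<in> RA \<times> RB. peval P (x,ra) (y,rb)} \<le> card RA * card RB"
proof -
  have fin: "finite RA" "finite RB" using assms(1) unfolding computes_rand_def by auto
  have W: "3 * card {(ra, rb) \<in> RA \<times> RB. peval P (x, ra) (y, rb) \<noteq> SSD x y} \<le> card RA * card RB"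
    using assms unfolding computes_rand_def by blast
  let ?A = "{(ra,rb) \<in> RA \<times> RB. peval P (x,ra) (y,rb)}"
  have subA: "?A \<subseteq> RA \<times> RB" by auto
  have finA: "finite ?A" by (rule finite_subset[OF subA]) (simp add: fin)
  {
    assume s: "SSD x y"
    have "{(ra, rb) \<in> RA \<times> RB. peval P (x, ra) (y, rb) \<noteq> SSD x y} = RA \<times> RB - ?A"
      using s by auto
    then have "card {(ra, rb) \<in> RA \<times> RB. peval P (x, ra) (y, rb) \<noteq> SSD x y} = card RA * card RB - card ?A"
      using card_Diff_subset[OF finA subA] by (simp add: card_cartesian_product)
    moreover have "card ?A \<le> card RA * card RB"
      using card_mono[OF _ subA] fin by (simp add: card_cartesian_product)
    ultimately show "3 * card ?A \<ge> 2 * (card RA * card RB)" using W by linarith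
  }
  {
    assume s: "\<not> SSD x y"
    have "{(ra, rb) \<in> RA \<times> RB. peval P (x, ra) (y, rb) \<noteq> SSD x y} = ?A"
      using s by auto
    then show "3 * card ?A \<le> card RA * card RB" using W by simp
  }
qed

lemma depth_pos:
  assumes "computes_rand SSD (bitstrings n) (bitstrings k) P RA RB" "1 \<le> k" "k \<le> n"
  shows "pdepth P \<ge> 1"
proof (rule ccontr)
  assume "\<not> pdepth P \<ge> 1"
  then have "pdepth P = 0" by simp
  then obtain v where Pv: "P = Out v" by (cases P) simp_all
  have "finite RA \<and> RA \<noteq> {} \<and> finite RB \<and> RB \<noteq> {}" using assms(1) unfolding computes_rand_def by blast
  then have ne: "card RA * card RB > 0" by (simp add: card_gt_0_iff)
  let ?y = "replicate k True"
  have y: "?y \<in> bitstrings k" by (simp add: bitstrings_def)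
  have x1: "replicate n True \<in> bitstrings n" "replicate n False \<in> bitstrings n" by (auto simp: bitstrings_def)
  have s1: "SSD (replicate n True) ?y"
  proof -
    have "replicate n True = replicate k True @ replicate (n - k) True"
      using assms(3) by (metis le_add_diff_inverse replicate_add)
    moreover have "subseq (replicate k True) (replicate k True @ replicate (n - k) True)"
      by (rule subseq_rev_drop_many) simp
    ultimately show ?thesis by (simp add: SSD_def)
  qed
  have s2: "\<not> SSD (replicate n False) ?y" unfolding SSD_def
  proof
    assume "subseq (replicate k True) (replicate n False)"
    moreover have "True \<in> set (replicate k True)" using assms(2) by simp
    ultimately obtain z where "z \<in> set (replicate n False)" "True = z" by (rule list_emb_set)
    then show False by (simp add: in_set_replicate)
  qed
  show False
  proof (cases v)
    case True
    have "3 * card {(ra,rb) \<in> RA \<times> RB. peval P (replicate n False,ra) (?y,rb)} \<le> card RA * card RB"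
      using acc_bounds(2)[OF assms(1) x1(2) y s2] .
    moreover have "{(ra,rb) \<in> RA \<times> RB. peval P (replicate n False,ra) (?y,rb)} = RA \<times> RB"
      using Pv True by auto
    ultimately show False using ne by (simp add: card_cartesian_product)
  next
    case False
    have h1: "3 * card {(ra,rb) \<in> RA \<times> RB. peval P (replicate n True,ra) (?y,rb)} \<ge> 2 * (card RA * card RB)"
      using acc_bounds(1)[OF assms(1) x1(1) y s1] .
    have h2: "{(ra,rb) \<in> RA \<times> RB. peval P (replicate n True,ra) (?y,rb)} = {}"
      using Pv False by auto
    show False using h1[unfolded h2] ne by simp
  qed
qed


lemma floor_eq_close: "\<lfloor>a::real\<rfloor> = \<lfloor>b\<rfloor> \<Longrightarrow> \<bar>a - b\<bar> < 1"
proof -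
  assume h: "\<lfloor>a::real\<rfloor> = \<lfloor>b\<rfloor>"
  have f: "real_of_int \<lfloor>a\<rfloor> \<le> a" "a < real_of_int \<lfloor>a\<rfloor> + 1" "real_of_int \<lfloor>b\<rfloor> \<le> b" "b < real_of_int \<lfloor>b\<rfloor> + 1"
    by (rule of_int_floor_le real_of_int_floor_add_one_gt)+
  then show ?thesis using h by (smt (verit))
qed

lemma main_bound:
  assumes C: "computes_rand SSD (bitstrings n) (bitstrings k) P RA RB" and k: "1 \<le> k" "k \<le> n"
  shows "k \<le> 2 ^ (2 * pdepth P + 4)"
proof -
  define d where "d = pdepth P"
  define Ps where "Ps = {p::bool list. length p \<le> d}"
  define L where "L = card Ps"
  define M where "M = 3 * L"
  have fin: "finite RA" "RA \<noteq> {}" "finite RB" "RB \<noteq> {}"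
    using C unfolding computes_rand_def by auto
  define NA where "NA = real (card RA)"
  define NB where "NB = real (card RB)"
  have NApos: "NA > 0" using fin unfolding NA_def by (simp add: card_gt_0_iff)
  have NBpos: "NB > 0" using fin unfolding NB_def by (simp add: card_gt_0_iff)
  define \<alpha> where "\<alpha> p x = real (card {ra\<in>RA. aw P (x,ra) p}) / NA" for p x
  define \<beta> where "\<beta> p y = real (card {rb\<in>RB. bw P (y,rb) p}) / NB" for p y
  define pr where "pr x y = real (card {(ra,rb) \<in> RA \<times> RB. peval P (x,ra) (y,rb)}) / (NA * NB)" for x y
  have finPs: "finite Ps" unfolding Ps_def by (rule finite_Ps)
  have nePs: "[] \<in> Ps" unfolding Ps_def by simp
  have Lpos: "L \<ge> 1" unfolding L_def using finPs nePs
    by (metis One_nat_def Suc_leI card_gt_0_iff empty_iff)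
  have Lle: "L \<le> 2 ^ (d + 1)" unfolding L_def Ps_def by (rule card_Ps)
  have Mpos: "real M > 0" unfolding M_def using Lpos by simp
  have prsum: "pr x y = (\<Sum>p\<in>Ps. if lv P p then \<alpha> p x * \<beta> p y else 0)" for x y
  proof -
    have "pr x y = real (\<Sum>p\<in>Ps. if lv P p then card {ra\<in>RA. aw P (x,ra) p} * card {rb\<in>RB. bw P (y,rb) p} else 0) / (NA * NB)"
      unfolding pr_def Ps_def d_def using count_acc[OF fin(1) fin(3), of P x y] by simp
    also have "\<dots> = (\<Sum>p\<in>Ps. real (if lv P p then card {ra\<in>RA. aw P (x,ra) p} * card {rb\<in>RB. bw P (y,rb) p} else 0) / (NA * NB))"
      by (simp only: of_nat_sum sum_divide_distrib)
    also have "\<dots> = (\<Sum>p\<in>Ps. if lv P p then \<alpha> p x * \<beta> p y else 0)"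
      by (rule sum.cong) (auto simp: \<alpha>_def \<beta>_def)
    finally show ?thesis .
  qed
  have \<alpha>01: "0 \<le> \<alpha> p x \<and> \<alpha> p x \<le> 1" for p x
  proof -
    have "card {ra\<in>RA. aw P (x,ra) p} \<le> card RA" by (rule card_mono[OF fin(1)]) auto
    then show ?thesis unfolding \<alpha>_def using NApos by (simp add: NA_def divide_le_eq_1)
  qed
  have \<beta>01: "0 \<le> \<beta> p y \<and> \<beta> p y \<le> 1" for p y
  proof -
    have "card {rb\<in>RB. bw P (y,rb) p} \<le> card RB" by (rule card_mono[OF fin(3)]) auto
    then show ?thesis unfolding \<beta>_def using NBpos by (simp add: NB_def divide_le_eq_1)
  qed
  have hi: "pr x y \<ge> 2/3" if "x \<in> bitstrings n" "y \<in> bitstrings k" "SSD x y" for x y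
  proof -
    have "3 * card {(ra,rb) \<in> RA \<times> RB. peval P (x,ra) (y,rb)} \<ge> 2 * (card RA * card RB)"
      by (rule acc_bounds(1)[OF C that])
    then have "3 * real (card {(ra,rb) \<in> RA \<times> RB. peval P (x,ra) (y,rb)}) \<ge> 2 * (NA * NB)"
      unfolding NA_def NB_def by (metis (mono_tags) of_nat_le_iff of_nat_mult of_nat_numeral)
    then show ?thesis unfolding pr_def using NApos NBpos by (simp add: field_simps)
  qed
  have lo: "pr x y \<le> 1/3" if "x \<in> bitstrings n" "y \<in> bitstrings k" "\<not> SSD x y" for x y
  proof -
    have "3 * card {(ra,rb) \<in> RA \<times> RB. peval P (x,ra) (y,rb)} \<le> card RA * card RB"
      by (rule acc_bounds(2)[OF C that])
    then have "3 * real (card {(ra,rb) \<in> RA \<times> RB. peval P (x,ra) (y,rb)}) \<le> NA * NB"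
      unfolding NA_def NB_def by (metis (mono_tags) of_nat_le_iff of_nat_mult of_nat_numeral)
    then show ?thesis unfolding pr_def using NApos NBpos by (simp add: field_simps)
  qed
  define sig where "sig y = restrict (\<lambda>p. nat \<lfloor>\<beta> p y * real M\<rfloor>) Ps" for y
  have inj: "inj_on sig (bitstrings k)"
  proof (rule inj_onI, rule ccontr)
    fix y y' assume y: "y \<in> bitstrings k" and y': "y' \<in> bitstrings k" and eq: "sig y = sig y'"
      and ne: "y \<noteq> y'"
    have ly: "length y = k" "length y' = k" using y y' by (auto simp: bitstrings_def)
    define x where "x = y @ replicate (n - k) (\<not> last y')"
    have xb: "x \<in> bitstrings n" unfolding x_def bitstrings_def using ly k by simp
    have w: "SSD x y" "\<not> SSD x y'" using witness[OF ly k(1) ne, of "n - k"] unfolding x_def by auto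
    have close: "\<bar>\<beta> p y - \<beta> p y'\<bar> < 1 / real M" if p: "p \<in> Ps" for p
    proof -
      have a: "nat \<lfloor>\<beta> p y * real M\<rfloor> = nat \<lfloor>\<beta> p y' * real M\<rfloor>"
        using fun_cong[OF eq, of p] p unfolding sig_def by simp
      have b: "\<lfloor>\<beta> p y * real M\<rfloor> \<ge> 0" "\<lfloor>\<beta> p y' * real M\<rfloor> \<ge> 0"
        using \<beta>01[of p y] \<beta>01[of p y'] by simp_all
      have "\<lfloor>\<beta> p y * real M\<rfloor> = \<lfloor>\<beta> p y' * real M\<rfloor>" by (metis a b eq_nat_nat_iff)
      then have "\<bar>\<beta> p y * real M - \<beta> p y' * real M\<bar> < 1" by (rule floor_eq_close)
      then have "\<bar>\<beta> p y - \<beta> p y'\<bar> * real M < 1"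
        using Mpos by (simp add: left_diff_distrib[symmetric] abs_mult)
      then show ?thesis using Mpos by (simp add: field_simps)
    qed
    have "pr x y - pr x y' = (\<Sum>p\<in>Ps. if lv P p then \<alpha> p x * (\<beta> p y - \<beta> p y') else 0)"
      unfolding prsum sum_subtractf[symmetric] by (rule sum.cong) (auto simp: algebra_simps)
    also have "\<dots> < (\<Sum>p\<in>Ps. 1 / real M)"
    proof (rule sum_strict_mono[OF finPs])
      show "Ps \<noteq> {}" using nePs by blast
      fix p assume p: "p \<in> Ps"
      have "\<alpha> p x * (\<beta> p y - \<beta> p y') \<le> \<bar>\<beta> p y - \<beta> p y'\<bar>"
      proof -
        have "\<alpha> p x * (\<beta> p y - \<beta> p y') \<le> \<alpha> p x * \<bar>\<beta> p y - \<beta> p y'\<bar>"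
          using \<alpha>01[of p x] by (intro mult_left_mono) auto
        also have "\<dots> \<le> 1 * \<bar>\<beta> p y - \<beta> p y'\<bar>"
          using \<alpha>01[of p x] by (intro mult_right_mono) auto
        finally show ?thesis by simp
      qed
      then show "(if lv P p then \<alpha> p x * (\<beta> p y - \<beta> p y') else 0) < 1 / real M"
        using close[OF p] Mpos by auto
    qed
    also have "\<dots> = 1/3" unfolding M_def L_def using Lpos L_def by simp
    finally have "pr x y - pr x y' < 1/3" .
    moreover have "pr x y \<ge> 2/3" using hi[OF xb y w(1)] .
    moreover have "pr x y' \<le> 1/3" using lo[OF xb y' w(2)] .
    ultimately show False by linarith
  qed
  have img: "sig ` bitstrings k \<subseteq> Pi\<^sub>E Ps (\<lambda>_. {0..M})"
  proof
    fix s assume "s \<in> sig ` bitstrings k"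
    then obtain y where s: "s = sig y" by blast
    have "nat \<lfloor>\<beta> p y * real M\<rfloor> \<le> M" for p
    proof -
      have "\<beta> p y * real M \<le> real M" using \<beta>01[of p y] Mpos by (simp add: mult_le_cancel_right1)
      then have "\<lfloor>\<beta> p y * real M\<rfloor> \<le> \<lfloor>real M\<rfloor>" by (rule floor_mono)
      then show ?thesis by simp
    qed
    then show "s \<in> Pi\<^sub>E Ps (\<lambda>_. {0..M})" unfolding s sig_def by (simp add: restrict_PiE_iff)
  qed
  have c1: "2 ^ k = card (sig ` bitstrings k)"
    using card_image[OF inj] card_bitstrings by simp
  have c2: "card (sig ` bitstrings k) \<le> card (Pi\<^sub>E Ps (\<lambda>_. {0..M}))"
    by (rule card_mono[OF finite_PiE[OF finPs] img]) simp
  have c3: "card (Pi\<^sub>E Ps (\<lambda>_. {0..M})) = (M + 1) ^ L"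
    unfolding L_def card_PiE[OF finPs] by simp
  have c4: "M + 1 \<le> 2 ^ (d + 3)"
  proof -
    have "M + 1 \<le> 4 * L" unfolding M_def using Lpos by simp
    also have "\<dots> \<le> 4 * 2 ^ (d + 1)" using Lle by simp
    also have "\<dots> = 2 ^ (d + 3)" by (simp add: power_add)
    finally show ?thesis .
  qed
  have c5: "(M + 1) ^ L \<le> (2 ^ (d + 3)) ^ L"
    by (rule power_mono[OF c4]) simp
  have c6: "((2::nat) ^ (d + 3)) ^ L \<le> (2 ^ (d + 3)) ^ (2 ^ (d + 1))"
    by (rule power_increasing[OF Lle]) simp
  have c7: "((2::nat) ^ (d + 3)) ^ (2 ^ (d + 1)) = 2 ^ ((d + 3) * 2 ^ (d + 1))"
    by (rule power_mult[symmetric])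
  have "(2::nat) ^ k \<le> 2 ^ ((d + 3) * 2 ^ (d + 1))"
    using c1 c2 c3 c5 c6 c7 by linarith
  then have c8: "k \<le> (d + 3) * 2 ^ (d + 1)"
    by (rule power_le_imp_le_exp[rotated]) simp
  have c9: "(d + 3) * 2 ^ (d + 1) \<le> 2 ^ (d + 3) * 2 ^ (d + 1)"
    using less_exp[of "d + 3"] by (intro mult_right_mono) auto
  have e: "d + 3 + (d + 1) = 2 * d + 4" by simp
  have c10: "(2::nat) ^ (d + 3) * 2 ^ (d + 1) = 2 ^ (2 * d + 4)"
    unfolding power_add[symmetric] e ..
  show ?thesis unfolding d_def[symmetric] using c8 c9 c10 by linarith
qed


theorem mainTheorem7:
  shows "\<exists>c>0. \<forall>n k::nat. 1 \<le> k \<and> k \<le> n \<longrightarrow>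
           real (Rcc SSD (bitstrings n) (bitstrings k)) \<ge> c * ln (real k)"
proof -
  have "\<forall>n k::nat. 1 \<le> k \<and> k \<le> n \<longrightarrow>
           real (Rcc SSD (bitstrings n) (bitstrings k)) \<ge> (1/6) * ln (real k)"
  proof (intro allI impI)
    fix n k :: nat assume nk: "1 \<le> k \<and> k \<le> n"
    let ?Q = "\<lambda>c. \<exists>P RA RB. computes_rand SSD (bitstrings n) (bitstrings k) P RA RB \<and> pdepth P \<le> c"
    have ex: "\<exists>c. ?Q c" using exists_proto[of n k] by blast
    have "?Q (Rcc SSD (bitstrings n) (bitstrings k))"
      unfolding Rcc_def by (rule LeastI_ex[OF ex])
    then obtain P RA RB where C: "computes_rand SSD (bitstrings n) (bitstrings k) P RA RB"
      and dP: "pdepth P \<le> Rcc SSD (bitstrings n) (bitstrings k)" by blast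
    define d where "d = pdepth P"
    have d1: "d \<ge> 1" unfolding d_def using depth_pos[OF C] nk by blast
    have "k \<le> 2 ^ (2 * d + 4)" unfolding d_def using main_bound[OF C] nk by blast
    also have "\<dots> \<le> 2 ^ (6 * d)" using d1 by (intro power_increasing) auto
    finally have "real k \<le> 2 ^ (6 * d)"
      by (metis of_nat_le_iff of_nat_numeral of_nat_power)
    then have "ln (real k) \<le> ln (2 ^ (6 * d))" using nk by (subst ln_le_cancel_iff) auto
    also have "\<dots> = real (6 * d) * ln 2" by (rule ln_realpow)
    finally have "(1/6) * ln (real k) \<le> real d * ln 2" by simp
    also have "\<dots> \<le> real d" using ln_2_less_1 mult_left_mono[of "ln 2" 1 "real d"] by simp
    also have "\<dots> \<le> real (Rcc SSD (bitstrings n) (bitstrings k))" using dP unfolding d_def by simp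
    finally show "real (Rcc SSD (bitstrings n) (bitstrings k)) \<ge> (1/6) * ln (real k)" .
  qed
  then show ?thesis by (intro exI[of _ "1/6"]) auto
qed

end
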